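(* Let $\mathcal{B}$ be a nontrivial boolean algebra and let $Y\subseteq \mathcal{B}^n$ be an algebraic set over $\mathcal{B}$. Then $Y$ is irreducible over $\mathcal{B}$ if and only if the coordinate algebra $\Gamma_{\mathcal{B}}(Y)$ embeds into $\mathcal{B}$.
   Context: Boolean algebras are considered as structures in the language $\{\vee,\cdot,\bar{\ },0,1\}$ (join, meet, complement, constants). A boolean equation in variables $X=\{x_1,\dots,x_n\}$ is an expression $t(X)=s(X)$ with $t,s$ terms of this language; a system is any set of such equations, and $V_{\mathcal{B}}(S)\subseteq\mathcal{B}^n$ denotes its solution set. A set $Y\subseteq\mathcal{B}^n$ is algebraic if $Y=V_{\mathcal{B}}(S)$ for some system $S$. A nonempty algebraic set is irreducible if it is not a finite union of proper algebraic subsets. For an algebraic set $Y$, define $t\sim_Y s$ on terms in $X$ iff $t(P)=s(P)$ for every $P\in Y$; the set of equivalence classes, with the induced operations, is the coordinate algebra $\Gamma_{\mathcal{B}}(Y)$ (it is a finite boolean algebra generated by the classes of $x_1,\dots,x_n$). *)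

theory Defs
  imports Main
begin

datatype bterm = Var nat | Join bterm bterm | Meet bterm bterm | Compl bterm | Zero | One

fun bvars :: "bterm \<Rightarrow> nat set" where
  "bvars (Var i) = {i}"
| "bvars (Join t s) = bvars t \<union> bvars s"
| "bvars (Meet t s) = bvars t \<union> bvars s"
| "bvars (Compl t) = bvars t"
| "bvars Zero = {}"
| "bvars One = {}"

definition terms_in :: "nat \<Rightarrow> bterm set" where
  "terms_in n = {t. bvars t \<subseteq> {..<n}}"

fun beval :: "bterm \<Rightarrow> 'a::boolean_algebra list \<Rightarrow> 'a" where
  "beval (Var i) P = P ! i"
| "beval (Join t s) P = sup (beval t P) (beval s P)"
| "beval (Meet t s) P = inf (beval t P) (beval s P)"
| "beval (Compl t) P = - beval t P"
| "beval Zero P = bot"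
| "beval One P = top"

definition Bpow :: "nat \<Rightarrow> 'a::boolean_algebra list set" where
  "Bpow n = {P. length P = n}"

definition solV :: "nat \<Rightarrow> (bterm \<times> bterm) set \<Rightarrow> 'a::boolean_algebra list set" where
  "solV n S = {P \<in> Bpow n. \<forall>(t, s) \<in> S. beval t P = beval s P}"

definition algebraic :: "nat \<Rightarrow> 'a::boolean_algebra list set \<Rightarrow> bool" where
  "algebraic n Y \<longleftrightarrow> (\<exists>S. S \<subseteq> terms_in n \<times> terms_in n \<and> Y = solV n S)"

definition irreducible_alg :: "nat \<Rightarrow> 'a::boolean_algebra list set \<Rightarrow> bool" where
  "irreducible_alg n Y \<longleftrightarrow> algebraic n Y \<and> Y \<noteq> {} \<and>
     \<not> (\<exists>F. finite F \<and> (\<forall>Z\<in>F. algebraic n Z \<and> Z \<subset> Y) \<and> Y = \<Union>F)"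

definition simY :: "nat \<Rightarrow> 'a::boolean_algebra list set \<Rightarrow> (bterm \<times> bterm) set" where
  "simY n Y = {(t, s). t \<in> terms_in n \<and> s \<in> terms_in n \<and> (\<forall>P\<in>Y. beval t P = beval s P)}"

definition cclass :: "nat \<Rightarrow> 'a::boolean_algebra list set \<Rightarrow> bterm \<Rightarrow> bterm set" where
  "cclass n Y t = simY n Y `` {t}"

definition coord_carrier :: "nat \<Rightarrow> 'a::boolean_algebra list set \<Rightarrow> bterm set set" where
  "coord_carrier n Y = terms_in n // simY n Y"

text \<open>An embedding (injective boolean-algebra homomorphism) of the coordinate algebra
  Gamma_B(Y) into B.  The operations of Gamma_B(Y) are the induced ones:
  [t] v [s] = [t v s], etc.\<close>
definition coord_embeds :: "nat \<Rightarrow> 'a::boolean_algebra list set \<Rightarrow> bool" where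
  "coord_embeds n Y \<longleftrightarrow> (\<exists>h :: bterm set \<Rightarrow> 'a.
      inj_on h (coord_carrier n Y) \<and>
      (\<forall>t\<in>terms_in n. \<forall>s\<in>terms_in n.
          h (cclass n Y (Join t s)) = sup (h (cclass n Y t)) (h (cclass n Y s)) \<and>
          h (cclass n Y (Meet t s)) = inf (h (cclass n Y t)) (h (cclass n Y s))) \<and>
      (\<forall>t\<in>terms_in n. h (cclass n Y (Compl t)) = - h (cclass n Y t)) \<and>
      h (cclass n Y Zero) = bot \<and> h (cclass n Y One) = top)"

end

theory Submission
  imports Defs "HOL-Library.FuncSet"
begin

lemma dec: "inf p x = inf p y \<Longrightarrow> inf (-p) x = inf (-p) y \<Longrightarrow> x = (y::'a::boolean_algebra)"
  by (metis inf_sup_distrib2 inf_top_left sup_compl_top)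
lemma pA: "inf p (sup (inf p a) (inf (-p) b)) = inf p (a::'a::boolean_algebra)"
  by (simp add: inf_sup_distrib1 inf_assoc[symmetric])
lemma nA: "inf (-p) (sup (inf p a) (inf (-p) b)) = inf (-p) (b::'a::boolean_algebra)"
  by (simp add: inf_sup_distrib1 inf_assoc[symmetric] inf_commute[of "-p" p])
lemma m: "inf p (-x) = inf p (-(inf p (x::'a::boolean_algebra)))"
  by (simp add: inf_sup_distrib1)
lemma il: "inf p (inf x y) = inf (inf p x) (inf p (y::'a::boolean_algebra))"
  by (metis inf.assoc inf.commute inf.left_idem)
lemma l1: "sup (inf p q) (inf (-p) q) = (q::'a::boolean_algebra)"
  by (metis inf_sup_distrib2 inf_top_left sup_compl_top)
lemma l2: "sup (sup (inf p a) (inf (-p) b)) (sup (inf p c) (inf (-p) d)) = sup (inf p (sup a c)) (inf (-p) (sup b (d::'a::boolean_algebra)))"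
proof (rule dec[of p])
  have "inf p (sup (sup (inf p a) (inf (-p) b)) (sup (inf p c) (inf (-p) d)))
    = sup (inf p (sup (inf p a) (inf (-p) b))) (inf p (sup (inf p c) (inf (-p) d)))" by (rule inf_sup_distrib1)
  also have "\<dots> = inf p (sup a c)" by (simp only: pA inf_sup_distrib1[symmetric])
  also have "\<dots> = inf p (sup (inf p (sup a c)) (inf (-p) (sup b d)))" by (rule pA[symmetric])
  finally show "inf p (sup (sup (inf p a) (inf (-p) b)) (sup (inf p c) (inf (-p) d))) = inf p (sup (inf p (sup a c)) (inf (-p) (sup b d)))" .
  have "inf (-p) (sup (sup (inf p a) (inf (-p) b)) (sup (inf p c) (inf (-p) d)))
    = sup (inf (-p) (sup (inf p a) (inf (-p) b))) (inf (-p) (sup (inf p c) (inf (-p) d)))" by (rule inf_sup_distrib1)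
  also have "\<dots> = inf (-p) (sup b d)" by (simp only: nA inf_sup_distrib1[symmetric])
  also have "\<dots> = inf (-p) (sup (inf p (sup a c)) (inf (-p) (sup b d)))" by (rule nA[symmetric])
  finally show "inf (-p) (sup (sup (inf p a) (inf (-p) b)) (sup (inf p c) (inf (-p) d))) = inf (-p) (sup (inf p (sup a c)) (inf (-p) (sup b d)))" .
qed
lemma l3: "inf (sup (inf p a) (inf (-p) b)) (sup (inf p c) (inf (-p) d)) = sup (inf p (inf a c)) (inf (-p) (inf b (d::'a::boolean_algebra)))"
proof (rule dec[of p])
  have "inf p (inf (sup (inf p a) (inf (-p) b)) (sup (inf p c) (inf (-p) d)))
    = inf (inf p (sup (inf p a) (inf (-p) b))) (inf p (sup (inf p c) (inf (-p) d)))" by (rule il)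
  also have "\<dots> = inf p (inf a c)" by (simp only: pA il[symmetric])
  also have "\<dots> = inf p (sup (inf p (inf a c)) (inf (-p) (inf b d)))" by (rule pA[symmetric])
  finally show "inf p (inf (sup (inf p a) (inf (-p) b)) (sup (inf p c) (inf (-p) d))) = inf p (sup (inf p (inf a c)) (inf (-p) (inf b d)))" .
  have "inf (-p) (inf (sup (inf p a) (inf (-p) b)) (sup (inf p c) (inf (-p) d)))
    = inf (inf (-p) (sup (inf p a) (inf (-p) b))) (inf (-p) (sup (inf p c) (inf (-p) d)))" by (rule il)
  also have "\<dots> = inf (-p) (inf b d)" by (simp only: nA il[symmetric])
  also have "\<dots> = inf (-p) (sup (inf p (inf a c)) (inf (-p) (inf b d)))" by (rule nA[symmetric])
  finally show "inf (-p) (inf (sup (inf p a) (inf (-p) b)) (sup (inf p c) (inf (-p) d))) = inf (-p) (sup (inf p (inf a c)) (inf (-p) (inf b d)))" .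
qed
lemma l4: "- (sup (inf p a) (inf (-p) b)) = sup (inf p (-a)) (inf (-p) (-(b::'a::boolean_algebra)))"
proof (rule dec[of p])
  show "inf p (- sup (inf p a) (inf (- p) b)) = inf p (sup (inf p (- a)) (inf (- p) (- b)))"
    by (metis m pA)
  show "inf (-p) (- sup (inf p a) (inf (- p) b)) = inf (-p) (sup (inf p (- a)) (inf (- p) (- b)))"
    by (metis m nA)
qed

lemma expand:
  fixes P :: "'a::boolean_algebra list"
  assumes "i < length P"
  shows "beval t P = sup (inf (P!i) (beval t (P[i:=top]))) (inf (- (P!i)) (beval t (P[i:=bot])))"
proof (induction t)
  case (Var j)
  show ?case
  proof (cases "j = i")
    case True then show ?thesis using assms by simp
  next
    case False then show ?thesis by (simp only: beval.simps nth_list_update_neq l1)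
  qed
next
  case (Join t1 t2) then show ?case by (simp only: beval.simps Join.IH l2)
next
  case (Meet t1 t2) then show ?case by (simp only: beval.simps Meet.IH l3)
next
  case (Compl t) then show ?case by (simp only: beval.simps Compl.IH l4)
qed simp_all

definition crispk :: "nat \<Rightarrow> nat \<Rightarrow> 'a::boolean_algebra list set" where
  "crispk n k = {P. length P = n \<and> (\<forall>i<n. k \<le> i \<longrightarrow> P!i = bot \<or> P!i = top)}"

lemma crisp_ext:
  fixes t s :: bterm
  assumes "\<forall>Q\<in>(crispk n 0 :: 'a::boolean_algebra list set). beval t Q = beval s Q"
  shows "\<forall>P\<in>(crispk n k :: 'a list set). beval t P = beval s P"
proof (induction k)
  case 0 then show ?case using assms by simp
next
  case (Suc k)
  show ?case
  proof
    fix P :: "'a list" assume P: "P \<in> crispk n (Suc k)"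
    show "beval t P = beval s P"
    proof (cases "k < n")
      case True
      have lk: "k < length P" using P True by (simp add: crispk_def)
      have a: "P[k:=top] \<in> crispk n k" "P[k:=bot] \<in> crispk n k"
        using P by (auto simp: crispk_def nth_list_update)
      show ?thesis
        using expand[OF lk, of t] expand[OF lk, of s] a Suc.IH by simp
    next
      case False
      then have "P \<in> crispk n k" using P by (auto simp: crispk_def)
      then show ?thesis using Suc.IH by blast
    qed
  qed
qed

lemma crispk_n: "length P = n \<Longrightarrow> P \<in> crispk n n"
  by (auto simp: crispk_def)

definition ptb :: "bool list \<Rightarrow> 'a::boolean_algebra list" where
  "ptb \<sigma> = map (\<lambda>b. if b then top else bot) \<sigma>"

definition tt :: "nat \<Rightarrow> bterm \<Rightarrow> bool list \<Rightarrow> 'a::boolean_algebra" where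
  "tt n t = (\<lambda>\<sigma>\<in>{\<sigma>. length \<sigma> = n}. beval t (ptb \<sigma>))"

lemma crisp0_ptb:
  assumes "Q \<in> (crispk n 0 :: 'a::boolean_algebra list set)"
  shows "Q = ptb (map (\<lambda>x. x = top) Q)" "length (map (\<lambda>x. x = top) Q) = n"
proof -
  have "\<forall>i<length Q. Q!i = bot \<or> Q!i = top" using assms by (auto simp: crispk_def)
  then show "Q = ptb (map (\<lambda>x. x = top) Q)"
    unfolding ptb_def by (auto intro!: nth_equalityI)
  show "length (map (\<lambda>x. x = top) Q) = n" using assms by (simp add: crispk_def)
qed

lemma tt_eq:
  fixes t s :: bterm
  assumes "(tt n t :: bool list \<Rightarrow> 'a::boolean_algebra) = tt n s" and "length (P::'a list) = n"
  shows "beval t P = beval s P"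
proof -
  have "\<forall>Q\<in>(crispk n 0 :: 'a list set). beval t Q = beval s Q"
  proof
    fix Q :: "'a list" assume Q: "Q \<in> crispk n 0"
    let ?\<sigma> = "map (\<lambda>x. x = top) Q"
    have "(tt n t :: bool list \<Rightarrow> 'a) ?\<sigma> = tt n s ?\<sigma>" using assms by simp
    then have "beval t (ptb ?\<sigma> :: 'a list) = beval s (ptb ?\<sigma>)"
      using crisp0_ptb(2)[OF Q] by (simp add: tt_def)
    then show "beval t Q = beval s Q" using crisp0_ptb(1)[OF Q] by simp
  qed
  from crisp_ext[OF this, of n] crispk_n[OF assms(2)] show ?thesis by blast
qed

lemma beval_crisp:
  assumes "bvars t \<subseteq> {..<length Q}" "\<forall>i<length Q. Q!i \<in> {bot, top::'a::boolean_algebra}"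
  shows "beval t Q \<in> {bot, top}"
  using assms by (induction t) auto

lemma tt_range:
  assumes "t \<in> terms_in n"
  shows "(tt n t :: bool list \<Rightarrow> 'a::boolean_algebra) \<in> PiE {\<sigma>. length \<sigma> = n} (\<lambda>_. {bot, top})"
proof -
  have "\<And>\<sigma>. length \<sigma> = n \<Longrightarrow> beval t (ptb \<sigma> :: 'a list) \<in> {bot, top}"
    by (rule beval_crisp) (use assms in \<open>auto simp: terms_in_def ptb_def\<close>)
  then show ?thesis by (auto simp: tt_def)
qed

lemma finite_tt:
  "finite ((tt n :: bterm \<Rightarrow> bool list \<Rightarrow> 'a::boolean_algebra) ` terms_in n)"
proof (rule finite_subset)
  show "(tt n :: bterm \<Rightarrow> bool list \<Rightarrow> 'a) ` terms_in n \<subseteq> PiE {\<sigma>. length \<sigma> = n} (\<lambda>_. {bot, top})"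
    using tt_range by blast
  have "finite {\<sigma>::bool list. set \<sigma> \<subseteq> UNIV \<and> length \<sigma> = n}"
    by (rule finite_lists_length_eq) simp
  then show "finite (PiE {\<sigma>::bool list. length \<sigma> = n} (\<lambda>_. {bot, top::'a}))"
    by (intro finite_PiE) auto
qed

lemma finite_image_factor:
  assumes "finite (g ` A)" "\<forall>x\<in>A. \<forall>y\<in>A. g x = g y \<longrightarrow> f x = f y"
  shows "finite (f ` A)"
proof -
  define r where "r k = f (SOME x. x \<in> A \<and> g x = k)" for k
  have rx: "r (g x) = f x" if x: "x \<in> A" for x
  proof -
    have sx: "(SOME y. y \<in> A \<and> g y = g x) \<in> A \<and> g (SOME y. y \<in> A \<and> g y = g x) = g x"
      by (rule someI[of _ x]) (simp add: x)
    then have "f (SOME y. y \<in> A \<and> g y = g x) = f x"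
      using assms(2) x by blast
    then show ?thesis by (simp add: r_def)
  qed
  have "f ` A \<subseteq> r ` (g ` A)"
  proof
    fix z assume "z \<in> f ` A"
    then obtain x where x: "x \<in> A" "z = f x" by blast
    then have "z = r (g x)" using rx by simp
    then show "z \<in> r ` (g ` A)" using x(1) by blast
  qed
  moreover have "finite (r ` (g ` A))" using assms(1) by (rule finite_imageI)
  ultimately show ?thesis by (rule finite_subset)
qed

lemma cclass_eq:
  assumes "t \<in> terms_in n"
  shows "cclass n Y t = {s. s \<in> terms_in n \<and> (\<forall>P\<in>Y. beval t P = beval s P)}"
  using assms by (auto simp: cclass_def simY_def)

lemma terms_in_simps[simp]:
  "Join t s \<in> terms_in n \<longleftrightarrow> t \<in> terms_in n \<and> s \<in> terms_in n"
  "Meet t s \<in> terms_in n \<longleftrightarrow> t \<in> terms_in n \<and> s \<in> terms_in n"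
  "Compl t \<in> terms_in n \<longleftrightarrow> t \<in> terms_in n"
  "Zero \<in> terms_in n" "One \<in> terms_in n"
  by (auto simp: terms_in_def)

lemma generic_embeds:
  fixes Y :: "'a::boolean_algebra list set" and P :: "'a list"
  assumes PY: "P \<in> Y"
    and gen: "\<forall>t\<in>terms_in n. \<forall>s\<in>terms_in n. beval t P = beval s P \<longrightarrow> (\<forall>Q\<in>Y. beval t Q = beval s Q)"
  shows "coord_embeds n Y"
proof -
  define h where "h C = beval (SOME t. t \<in> C) P" for C :: "bterm set"
  have hc: "h (cclass n Y t) = beval t P" if t: "t \<in> terms_in n" for t
  proof -
    have "t \<in> cclass n Y t" using t by (simp add: cclass_eq)
    then have "(SOME u. u \<in> cclass n Y t) \<in> cclass n Y t" by (rule someI)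
    then show ?thesis using t PY by (auto simp: h_def cclass_eq)
  qed
  have inj: "inj_on h (coord_carrier n Y)"
  proof (rule inj_onI)
    fix C D assume C: "C \<in> coord_carrier n Y" and D: "D \<in> coord_carrier n Y" and eq: "h C = h D"
    obtain t where t: "t \<in> terms_in n" "C = cclass n Y t"
      using C by (auto simp: coord_carrier_def quotient_def cclass_def)
    obtain s where s: "s \<in> terms_in n" "D = cclass n Y s"
      using D by (auto simp: coord_carrier_def quotient_def cclass_def)
    have "beval t P = beval s P" using eq t s hc by simp
    then have "\<forall>Q\<in>Y. beval t Q = beval s Q" using gen t s by blast
    then show "C = D" using t s by (auto simp: cclass_eq)
  qed
  show ?thesis unfolding coord_embeds_def
    by (rule exI[of _ h]) (simp add: inj hc)
qed

lemma point_of_embed: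
  fixes Y :: "'a::boolean_algebra list set"
  assumes "coord_embeds n Y" and alg: "algebraic n Y"
  obtains P where "P \<in> Y" and "\<forall>t\<in>terms_in n. \<forall>s\<in>terms_in n. beval t P = beval s P \<longrightarrow> (\<forall>Q\<in>Y. beval t Q = beval s Q)"
proof -
  obtain h :: "bterm set \<Rightarrow> 'a" where
    inj: "inj_on h (coord_carrier n Y)" and
    hom: "\<forall>t\<in>terms_in n. \<forall>s\<in>terms_in n.
          h (cclass n Y (Join t s)) = sup (h (cclass n Y t)) (h (cclass n Y s)) \<and>
          h (cclass n Y (Meet t s)) = inf (h (cclass n Y t)) (h (cclass n Y s))" and
    hc: "\<forall>t\<in>terms_in n. h (cclass n Y (Compl t)) = - h (cclass n Y t)" and
    h0: "h (cclass n Y Zero) = bot" and h1: "h (cclass n Y One) = top"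
    using assms(1) unfolding coord_embeds_def by blast
  define P where "P = map (\<lambda>i. h (cclass n Y (Var i))) [0..<n]"
  have lenP: "length P = n" by (simp add: P_def)
  have ev: "bvars t \<subseteq> {..<n} \<longrightarrow> h (cclass n Y t) = beval t P" for t
  proof (induction t)
    case (Var x) then show ?case by (simp add: P_def)
  next
    case (Join t1 t2) then show ?case using hom by (simp add: terms_in_def)
  next
    case (Meet t1 t2) then show ?case using hom by (simp add: terms_in_def)
  next
    case (Compl t) then show ?case using hc by (simp add: terms_in_def)
  qed (use h0 h1 in auto)
  then have ev': "t \<in> terms_in n \<Longrightarrow> h (cclass n Y t) = beval t P" for t
    by (simp add: terms_in_def)
  have carr: "t \<in> terms_in n \<Longrightarrow> cclass n Y t \<in> coord_carrier n Y" for t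
    by (auto simp: coord_carrier_def quotient_def cclass_def)
  have key: "\<forall>Q\<in>Y. beval t Q = beval s Q"
    if "t \<in> terms_in n" "s \<in> terms_in n" "beval t P = beval s P" for t s
  proof -
    have "h (cclass n Y t) = h (cclass n Y s)" using that ev' by simp
    then have "cclass n Y t = cclass n Y s" using inj carr that by (meson inj_onD)
    moreover have "s \<in> cclass n Y s" using that by (simp add: cclass_eq)
    ultimately show ?thesis using that by (auto simp: cclass_eq)
  qed
  obtain S where S: "S \<subseteq> terms_in n \<times> terms_in n" "Y = solV n S"
    using alg by (auto simp: algebraic_def)
  have "P \<in> Y"
  proof -
    have "beval t P = beval s P" if "(t, s) \<in> S" for t s
    proof -
      have ts: "t \<in> terms_in n" "s \<in> terms_in n" using S(1) that by auto
      have "\<forall>Q\<in>Y. beval t Q = beval s Q" using S(2) that by (auto simp: solV_def)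
      then have "cclass n Y t = cclass n Y s" using ts by (auto simp: cclass_eq)
      then show ?thesis using ev' ts by metis
    qed
    then show ?thesis using S(2) lenP by (auto simp: solV_def Bpow_def)
  qed
  then show ?thesis using that key by blast
qed

theorem theorem1:
  fixes Y :: "'a::boolean_algebra list set" and n :: nat
  assumes "(bot::'a) \<noteq> top"
    and "algebraic n Y"
  shows "irreducible_alg n Y \<longleftrightarrow> coord_embeds n Y"
proof
  assume irr: "irreducible_alg n Y"
  obtain S where S: "S \<subseteq> terms_in n \<times> terms_in n" "Y = solV n S"
    using assms(2) by (auto simp: algebraic_def)
  have YB: "Y \<subseteq> Bpow n" using S(2) by (auto simp: solV_def)
  show "coord_embeds n Y"
  proof (rule ccontr)
    assume ne: "\<not> coord_embeds n Y"
    define D where "D = {(t, s). t \<in> terms_in n \<and> s \<in> terms_in n \<and> \<not> (\<forall>Q\<in>Y. beval t Q = beval s Q)}"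
    define Z where "Z = (\<lambda>(t, s). {P \<in> Y. beval t P = beval s P})"
    have cov: "\<forall>P\<in>Y. \<exists>x\<in>D. P \<in> Z x"
    proof
      fix P assume P: "P \<in> Y"
      show "\<exists>x\<in>D. P \<in> Z x"
      proof (rule ccontr)
        assume "\<not> (\<exists>x\<in>D. P \<in> Z x)"
        then have "\<forall>t\<in>terms_in n. \<forall>s\<in>terms_in n. beval t P = beval s P \<longrightarrow> (\<forall>Q\<in>Y. beval t Q = beval s Q)"
          using P by (auto simp: D_def Z_def)
        then show False using generic_embeds[OF P] ne by blast
      qed
    qed
    define F where "F = Z ` D"
    have "finite F"
      unfolding F_def
    proof (rule finite_image_factor[where g = "\<lambda>(t, s). ((tt n t :: bool list \<Rightarrow> 'a), (tt n s :: bool list \<Rightarrow> 'a))"])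
      have "(\<lambda>(t, s). ((tt n t :: bool list \<Rightarrow> 'a), (tt n s :: bool list \<Rightarrow> 'a))) ` D
            \<subseteq> (tt n ` terms_in n) \<times> (tt n ` terms_in n)"
        by (auto simp: D_def)
      then show "finite ((\<lambda>(t, s). ((tt n t :: bool list \<Rightarrow> 'a), (tt n s :: bool list \<Rightarrow> 'a))) ` D)"
        using finite_tt by (meson finite_SigmaI finite_subset)
      show "\<forall>x\<in>D. \<forall>y\<in>D. (case x of (t, s) \<Rightarrow> ((tt n t :: bool list \<Rightarrow> 'a), (tt n s :: bool list \<Rightarrow> 'a))) =
              (case y of (t, s) \<Rightarrow> (tt n t, tt n s)) \<longrightarrow> Z x = Z y"
      proof (intro ballI impI)
        fix x y assume "x \<in> D" "y \<in> D" and eq: "(case x of (t, s) \<Rightarrow> ((tt n t :: bool list \<Rightarrow> 'a), (tt n s :: bool list \<Rightarrow> 'a))) =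
              (case y of (t, s) \<Rightarrow> (tt n t, tt n s))"
        obtain t s where x: "x = (t, s)" by force
        obtain t' s' where y: "y = (t', s')" by force
        have e1: "(tt n t :: bool list \<Rightarrow> 'a) = tt n t'" and e2: "(tt n s :: bool list \<Rightarrow> 'a) = tt n s'"
          using eq x y by auto
        have "\<forall>P\<in>Y. beval t P = beval t' P \<and> beval s P = beval s' P"
          using tt_eq[OF e1] tt_eq[OF e2] YB by (auto simp: Bpow_def)
        then show "Z x = Z y" using x y by (auto simp: Z_def)
      qed
    qed
    moreover have "\<forall>W\<in>F. algebraic n W \<and> W \<subset> Y"
    proof
      fix W assume "W \<in> F"
      then obtain t s where ts: "(t, s) \<in> D" "W = Z (t, s)" by (auto simp: F_def)
      have W1: "W = solV n (insert (t, s) S)" using ts S(2) by (auto simp: Z_def solV_def)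
      have W2: "insert (t, s) S \<subseteq> terms_in n \<times> terms_in n" using S(1) ts by (auto simp: D_def)
      have "algebraic n W" unfolding algebraic_def W1 using W2 by blast
      moreover have "W \<subset> Y" using ts by (auto simp: Z_def D_def)
      ultimately show "algebraic n W \<and> W \<subset> Y" by blast
    qed
    moreover have "Y = \<Union>F" using cov by (auto simp: F_def Z_def)
    ultimately have "\<exists>F. finite F \<and> (\<forall>Z\<in>F. algebraic n Z \<and> Z \<subset> Y) \<and> Y = \<Union>F"
      by blast
    then show False using irr unfolding irreducible_alg_def by blast
  qed
next
  assume emb: "coord_embeds n Y"
  obtain P where PY: "P \<in> Y" and gen: "\<forall>t\<in>terms_in n. \<forall>s\<in>terms_in n. beval t P = beval s P \<longrightarrow> (\<forall>Q\<in>Y. beval t Q = beval s Q)"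
    using point_of_embed[OF emb assms(2)] by blast
  have "\<not> (\<exists>F. finite F \<and> (\<forall>Z\<in>F. algebraic n Z \<and> Z \<subset> Y) \<and> Y = \<Union>F)"
  proof
    assume "\<exists>F. finite F \<and> (\<forall>Z\<in>F. algebraic n Z \<and> Z \<subset> Y) \<and> Y = \<Union>F"
    then obtain F where F: "\<forall>Z\<in>F. algebraic n Z \<and> Z \<subset> Y" "Y = \<Union>F" by blast
    obtain Z where Z: "Z \<in> F" "P \<in> Z" using PY F(2) by blast
    obtain T where T: "T \<subseteq> terms_in n \<times> terms_in n" "Z = solV n T"
    proof -
      have "algebraic n Z" using F(1) Z(1) by blast
      then show ?thesis using that unfolding algebraic_def by blast
    qed
    obtain Q where Q: "Q \<in> Y" "Q \<notin> Z" using F(1) Z(1) by blast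
    obtain S0 where S0: "Y = solV n S0" using assms(2) unfolding algebraic_def by blast
    have QB: "Q \<in> Bpow n" using Q(1) unfolding S0 solV_def by blast
    obtain t s where ts: "(t, s) \<in> T" "beval t Q \<noteq> beval s Q"
      using Q(2) QB T(2) by (auto simp: solV_def)
    have "beval t P = beval s P" using Z(2) T(2) ts(1) by (auto simp: solV_def)
    then have "\<forall>Q\<in>Y. beval t Q = beval s Q" using gen T(1) ts(1) by blast
    then show False using Q(1) ts(2) by blast
  qed
  moreover have "Y \<noteq> {}" using PY by blast
  ultimately show "irreducible_alg n Y" using assms(2) unfolding irreducible_alg_def by blast
qed

end
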